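(* Let $B$ be a blueprint. Every maximal ideal of $B$ is a prime ideal. If $B$ has a zero, then every maximal congruence on $B$ is a prime congruence.
   Context: A monoid is a commutative semigroup $A$, written multiplicatively, with neutral element $1$. For a monoid $A$, $\mathbb N[A]$ denotes the semiring of finite formal sums $\sum a_i$ of elements $a_i\in A$ (repetitions allowed), with empty sum $\underline0$ and multiplication extended bilinearly from $A$. A pre-addition on $A$ is a relation $\mathcal R\subseteq\mathbb N[A]\times\mathbb N[A]$, written $\sum a_i\equiv\sum b_j$, which is an equivalence relation and satisfies: if $\sum a_i\equiv\sum b_j$ and $\sum c_k\equiv\sum d_l$, then $\sum a_i+\sum c_k\equiv\sum b_j+\sum d_l$ and $\sum_{i,k}a_ic_k\equiv\sum_{j,l}b_jd_l$. A blueprint $B=(A,\mathcal R)$ is a monoid $A$ with a pre-addition $\mathcal R$; we write $a\in B$ for $a\in A$. An element $e$ with $e\equiv\underline0$ is a zero of $B$. $B$ is proper if $a\equiv b$ for $a,b\in A$ implies $a=b$. For an equivalence relation $\sim$ on $A$, its linear extension $\sim_{\mathbb N}$ is the equivalence relation on $\mathbb N[A]$ generated by $\sum_{i=1}^n a_i\sim_{\mathbb N}\sum_{i=1}^n b_i$ whenever $a_i\sim b_i$ for all $i$; $\sim_{\mathcal R}$ is the smallest equivalence relation on $\mathbb N[A]$ containing $\mathcal R$ and $\sim_{\mathbb N}$. A congruence on $B$ is an equivalence relation $\sim$ on $A$ such that (C1) $\sim_{\mathbb N}$ is a pre-addition, and (C2) the restriction of $\sim_{\mathcal R}$ to $A$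 equals $\sim$. The quotient $B/\sim$ has monoid $A/\sim$ and the smallest pre-addition containing all $\sum[a_i]\equiv\sum[b_j]$ with $\sum a_i\equiv\sum b_j$ in $B$. A congruence is proper if it has more than one equivalence class; a maximal congruence is a proper congruence not contained in a strictly larger proper congruence. A blueprint is integral if it is proper, $1\not\equiv\underline0$, and every element is either a zero or integral (multiplication by it is injective on the monoid). A prime congruence is a proper congruence $\sim$ with $B/\sim$ integral. For $I\subseteq B$: $a\sim^I b$ iff $a=b$ or $a,b\in I$; $a\sim_I b$ iff there is a finite sequence $a\equiv\sum_k c_{1,k}\sim^I_{\mathbb N}\sum_k d_{1,k}\equiv\cdots\sim^I_{\mathbb N}\sum_k d_{n,k}\equiv b$ with $c_{i,k},d_{i,k}\in A$. An ideal is a subset $I$ with (I1) $IB\subseteq I$; (I2) every zero of $B$ lies in $I$; (I3) if $a\sim_I b$ and $b\in I$ then $a\in I$. An ideal is proper if $I\neq B$; a maximal ideal is a proper ideal not contained in a strictly larger proper ideal. A prime ideal is an ideal $\mathfrak p$ such that $B\setminus\mathfrak p$ is a submonoid of $A$ (contains $1$, closed under multiplication). *)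

theory Defs
  imports "HOL-Library.Multiset"
begin

text \<open>A blueprint: a commutative monoid given by a carrier, multiplication and unit,
  together with a relation on finite formal sums (multisets) of monoid elements.
  The empty multiset is the empty sum.\<close>

record 'a blueprint =
  bp_carrier :: "'a set"
  bp_mult :: "'a \<Rightarrow> 'a \<Rightarrow> 'a"
  bp_one :: 'a
  bp_rel :: "('a multiset \<times> 'a multiset) set"

definition is_monoid :: "('a, 'b) blueprint_scheme \<Rightarrow> bool" where
  "is_monoid B \<longleftrightarrow> bp_one B \<in> bp_carrier B
    \<and> (\<forall>a\<in>bp_carrier B. \<forall>b\<in>bp_carrier B. bp_mult B a b \<in> bp_carrier B)
    \<and> (\<forall>a\<in>bp_carrier B. \<forall>b\<in>bp_carrier B. \<forall>c\<in>bp_carrier B.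
          bp_mult B (bp_mult B a b) c = bp_mult B a (bp_mult B b c))
    \<and> (\<forall>a\<in>bp_carrier B. \<forall>b\<in>bp_carrier B. bp_mult B a b = bp_mult B b a)
    \<and> (\<forall>a\<in>bp_carrier B. bp_mult B (bp_one B) a = a)"

definition NA :: "('a, 'b) blueprint_scheme \<Rightarrow> 'a multiset set" where
  "NA B = {M. set_mset M \<subseteq> bp_carrier B}"

definition msum_mult :: "('a, 'b) blueprint_scheme \<Rightarrow> 'a multiset \<Rightarrow> 'a multiset \<Rightarrow> 'a multiset" where
  "msum_mult B M N = sum_mset (image_mset (\<lambda>a. image_mset (\<lambda>c. bp_mult B a c) N) M)"

definition pre_addition :: "('a, 'b) blueprint_scheme \<Rightarrow> ('a multiset \<times> 'a multiset) set \<Rightarrow> bool" where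
  "pre_addition B R \<longleftrightarrow> equiv (NA B) R
    \<and> (\<forall>M N P Q. (M, N) \<in> R \<longrightarrow> (P, Q) \<in> R \<longrightarrow>
         (M + P, N + Q) \<in> R \<and> (msum_mult B M P, msum_mult B N Q) \<in> R)"

definition blueprint :: "('a, 'b) blueprint_scheme \<Rightarrow> bool" where
  "blueprint B \<longleftrightarrow> is_monoid B \<and> pre_addition B (bp_rel B)"

definition is_zero :: "('a, 'b) blueprint_scheme \<Rightarrow> 'a \<Rightarrow> bool" where
  "is_zero B e \<longleftrightarrow> e \<in> bp_carrier B \<and> ({#e#}, {#}) \<in> bp_rel B"

definition proper_bp :: "('a, 'b) blueprint_scheme \<Rightarrow> bool" where
  "proper_bp B \<longleftrightarrow> (\<forall>a\<in>bp_carrier B. \<forall>b\<in>bp_carrier B. ({#a#}, {#b#}) \<in> bp_rel B \<longrightarrow> a = b)"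

definition integral_elem :: "('a, 'b) blueprint_scheme \<Rightarrow> 'a \<Rightarrow> bool" where
  "integral_elem B a \<longleftrightarrow> a \<in> bp_carrier B \<and> inj_on (bp_mult B a) (bp_carrier B)"

definition integral_bp :: "('a, 'b) blueprint_scheme \<Rightarrow> bool" where
  "integral_bp B \<longleftrightarrow> proper_bp B \<and> ({#bp_one B#}, {#}) \<notin> bp_rel B
    \<and> (\<forall>a\<in>bp_carrier B. is_zero B a \<or> integral_elem B a)"

definition gen_equiv :: "'c set \<Rightarrow> ('c \<times> 'c) set \<Rightarrow> ('c \<times> 'c) set" where
  "gen_equiv X S = \<Inter>{E. equiv X E \<and> S \<subseteq> E}"

definition lin_gen :: "('a \<times> 'a) set \<Rightarrow> ('a multiset \<times> 'a multiset) set" where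
  "lin_gen r = {(mset (map fst ps), mset (map snd ps)) | ps. set ps \<subseteq> r}"

definition lin_ext :: "('a, 'b) blueprint_scheme \<Rightarrow> ('a \<times> 'a) set \<Rightarrow> ('a multiset \<times> 'a multiset) set" where
  "lin_ext B r = gen_equiv (NA B) (lin_gen r)"

definition R_ext :: "('a, 'b) blueprint_scheme \<Rightarrow> ('a \<times> 'a) set \<Rightarrow> ('a multiset \<times> 'a multiset) set" where
  "R_ext B r = gen_equiv (NA B) (bp_rel B \<union> lin_ext B r)"

definition congruence :: "('a, 'b) blueprint_scheme \<Rightarrow> ('a \<times> 'a) set \<Rightarrow> bool" where
  "congruence B r \<longleftrightarrow> equiv (bp_carrier B) r
    \<and> pre_addition B (lin_ext B r)
    \<and> {(a, b). a \<in> bp_carrier B \<and> b \<in> bp_carrier B \<and> ({#a#}, {#b#}) \<in> R_ext B r} = r"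

definition quot_monoid :: "('a, 'b) blueprint_scheme \<Rightarrow> ('a \<times> 'a) set \<Rightarrow> 'a set blueprint" where
  "quot_monoid B r = \<lparr> bp_carrier = bp_carrier B // r,
     bp_mult = (\<lambda>X Y. r `` {bp_mult B (SOME a. a \<in> X) (SOME b. b \<in> Y)}),
     bp_one = r `` {bp_one B},
     bp_rel = {} \<rparr>"

definition quotient_bp :: "('a, 'b) blueprint_scheme \<Rightarrow> ('a \<times> 'a) set \<Rightarrow> 'a set blueprint" where
  "quotient_bp B r = quot_monoid B r \<lparr> bp_rel :=
     \<Inter>{P. pre_addition (quot_monoid B r) P \<and>
        {(image_mset (\<lambda>a. r `` {a}) M, image_mset (\<lambda>a. r `` {a}) N) | M N. (M, N) \<in> bp_rel B} \<subseteq> P} \<rparr>"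

definition proper_congruence :: "('a, 'b) blueprint_scheme \<Rightarrow> ('a \<times> 'a) set \<Rightarrow> bool" where
  "proper_congruence B r \<longleftrightarrow> congruence B r \<and> (\<exists>a\<in>bp_carrier B. \<exists>b\<in>bp_carrier B. (a, b) \<notin> r)"

definition maximal_congruence :: "('a, 'b) blueprint_scheme \<Rightarrow> ('a \<times> 'a) set \<Rightarrow> bool" where
  "maximal_congruence B r \<longleftrightarrow> proper_congruence B r
    \<and> (\<forall>r'. proper_congruence B r' \<and> r \<subseteq> r' \<longrightarrow> r' = r)"

definition prime_congruence :: "('a, 'b) blueprint_scheme \<Rightarrow> ('a \<times> 'a) set \<Rightarrow> bool" where
  "prime_congruence B r \<longleftrightarrow> proper_congruence B r \<and> integral_bp (quotient_bp B r)"

definition sim_sup :: "('a, 'b) blueprint_scheme \<Rightarrow> 'a set \<Rightarrow> ('a \<times> 'a) set" where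
  "sim_sup B I = {(a, b). a \<in> bp_carrier B \<and> b \<in> bp_carrier B \<and> (a = b \<or> (a \<in> I \<and> b \<in> I))}"

definition sim_sub :: "('a, 'b) blueprint_scheme \<Rightarrow> 'a set \<Rightarrow> ('a \<times> 'a) set" where
  "sim_sub B I = {(a, b). a \<in> bp_carrier B \<and> b \<in> bp_carrier B \<and>
     ({#a#}, {#b#}) \<in> (bp_rel B O lin_ext B (sim_sup B I))\<^sup>+ O bp_rel B}"

definition ideal :: "('a, 'b) blueprint_scheme \<Rightarrow> 'a set \<Rightarrow> bool" where
  "ideal B I \<longleftrightarrow> I \<subseteq> bp_carrier B
    \<and> (\<forall>a\<in>I. \<forall>b\<in>bp_carrier B. bp_mult B a b \<in> I)
    \<and> (\<forall>e. is_zero B e \<longrightarrow> e \<in> I)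
    \<and> (\<forall>a b. (a, b) \<in> sim_sub B I \<and> b \<in> I \<longrightarrow> a \<in> I)"

definition maximal_ideal :: "('a, 'b) blueprint_scheme \<Rightarrow> 'a set \<Rightarrow> bool" where
  "maximal_ideal B I \<longleftrightarrow> ideal B I \<and> I \<noteq> bp_carrier B
    \<and> (\<forall>J. ideal B J \<and> J \<noteq> bp_carrier B \<and> I \<subseteq> J \<longrightarrow> J = I)"

definition prime_ideal :: "('a, 'b) blueprint_scheme \<Rightarrow> 'a set \<Rightarrow> bool" where
  "prime_ideal B P \<longleftrightarrow> ideal B P \<and> bp_one B \<in> bp_carrier B - P
    \<and> (\<forall>a\<in>bp_carrier B - P. \<forall>b\<in>bp_carrier B - P. bp_mult B a b \<in> bp_carrier B - P)"

end

theory Submission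
  imports Defs
begin


lemma gen_equiv_sub: "S \<subseteq> gen_equiv X S"
  unfolding gen_equiv_def by blast

lemma gen_equiv_equiv: assumes "S \<subseteq> X \<times> X" shows "equiv X (gen_equiv X S)"
proof -
  have ne: "X \<times> X \<in> {E. equiv X E \<and> S \<subseteq> E}"
    using assms by (auto simp: equiv_def refl_on_def sym_def trans_def)
  show ?thesis unfolding gen_equiv_def
  proof (rule equivI)
    show "\<Inter>{E. equiv X E \<and> S \<subseteq> E} \<subseteq> X \<times> X" using ne by (rule Inter_lower)
    show "refl_on X (\<Inter>{E. equiv X E \<and> S \<subseteq> E})"
      by (auto simp: refl_on_def equiv_def)
    show "sym (\<Inter>{E. equiv X E \<and> S \<subseteq> E})"
      by (auto simp: sym_def equiv_def)
    show "trans (\<Inter>{E. equiv X E \<and> S \<subseteq> E})"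
      unfolding trans_def equiv_def by blast
  qed
qed

lemma gen_equiv_least: "equiv X E \<Longrightarrow> S \<subseteq> E \<Longrightarrow> gen_equiv X S \<subseteq> E"
  unfolding gen_equiv_def by blast

lemma gen_equiv_map:
  assumes G: "equiv X G" and f: "\<And>M. M \<in> X \<Longrightarrow> f M \<in> X"
    and S: "\<And>M N. (M, N) \<in> S \<Longrightarrow> (f M, f N) \<in> G" and SX: "S \<subseteq> X \<times> X"
    and MN: "(M, N) \<in> gen_equiv X S"
  shows "(f M, f N) \<in> G"
proof -
  let ?E = "{(M, N). M \<in> X \<and> N \<in> X \<and> (f M, f N) \<in> G}"
  have "equiv X ?E"
    using G f unfolding equiv_def refl_on_def sym_def trans_def by blast
  moreover have "S \<subseteq> ?E" using S SX by blast
  ultimately have "gen_equiv X S \<subseteq> ?E" by (rule gen_equiv_least)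
  then show ?thesis using MN by blast
qed

lemma gen_equiv_op:
  assumes SX: "S \<subseteq> X \<times> X"
    and cl: "\<And>M N. M \<in> X \<Longrightarrow> N \<in> X \<Longrightarrow> op M N \<in> X"
    and l: "\<And>M N P. (M, N) \<in> S \<Longrightarrow> P \<in> X \<Longrightarrow> (op M P, op N P) \<in> S"
    and r: "\<And>M N P. (M, N) \<in> S \<Longrightarrow> P \<in> X \<Longrightarrow> (op P M, op P N) \<in> S"
    and MN: "(M, N) \<in> gen_equiv X S" and PQ: "(P, Q) \<in> gen_equiv X S"
  shows "(op M P, op N Q) \<in> gen_equiv X S"
proof -
  have eq: "equiv X (gen_equiv X S)" by (rule gen_equiv_equiv[OF SX])
  then have GX: "gen_equiv X S \<subseteq> X \<times> X" by (simp add: equiv_def)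
  have P: "P \<in> X" and N: "N \<in> X" using MN PQ GX by auto
  have 1: "(op M P, op N P) \<in> gen_equiv X S"
    using gen_equiv_map[OF eq, of "\<lambda>M. op M P", OF _ _ SX MN] cl P l gen_equiv_sub by blast
  have 2: "(op N P, op N Q) \<in> gen_equiv X S"
    using gen_equiv_map[OF eq, of "\<lambda>P. op N P", OF _ _ SX PQ] cl N r gen_equiv_sub by blast
  show ?thesis using 1 2 eq unfolding equiv_def trans_def by blast
qed

lemma msum_mult_add: "msum_mult B (add_mset a M) N = image_mset (bp_mult B a) N + msum_mult B M N"
  by (simp add: msum_mult_def)

lemma msum_mult_empty[simp]: "msum_mult B {#} N = {#}"
  by (simp add: msum_mult_def)

lemma msum_mult_single_r: "msum_mult B M {#b#} = image_mset (\<lambda>a. bp_mult B a b) M"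
  by (induction M) (simp_all add: msum_mult_add)

lemma msum_mult_single_l: "msum_mult B {#a#} N = image_mset (bp_mult B a) N"
  by (simp add: msum_mult_add)

lemma trancl_map:
  assumes "(x, y) \<in> A\<^sup>+" and "\<And>u v. (u, v) \<in> A \<Longrightarrow> (f u, f v) \<in> C"
  shows "(f x, f y) \<in> C\<^sup>+"
  using assms(1)
proof (induction rule: trancl.induct)
  case (r_into_trancl a b) then show ?case using assms(2) by blast
next
  case (trancl_into_trancl a b c) then show ?case using assms(2) by (meson trancl.simps)
qed

lemma bp_equiv: "blueprint B \<Longrightarrow> equiv (NA B) (bp_rel B)"
  by (simp add: blueprint_def pre_addition_def)

lemma bp_closed: "blueprint B \<Longrightarrow> (M, N) \<in> bp_rel B \<Longrightarrow> (P, Q) \<in> bp_rel B \<Longrightarrow>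
   (M + P, N + Q) \<in> bp_rel B \<and> (msum_mult B M P, msum_mult B N Q) \<in> bp_rel B"
  by (simp add: blueprint_def pre_addition_def)

lemma bp_monoid: "blueprint B \<Longrightarrow> is_monoid B"
  by (simp add: blueprint_def)

lemma bp_refl: "blueprint B \<Longrightarrow> M \<in> NA B \<Longrightarrow> (M, M) \<in> bp_rel B"
  using bp_equiv by (metis equiv_def refl_on_def)

lemma single_NA: "a \<in> bp_carrier B \<Longrightarrow> {#a#} \<in> NA B"
  by (simp add: NA_def)

lemma rel_mult_r:
  assumes "blueprint B" "(M, N) \<in> bp_rel B" "b \<in> bp_carrier B"
  shows "(image_mset (\<lambda>a. bp_mult B a b) M, image_mset (\<lambda>a. bp_mult B a b) N) \<in> bp_rel B"
  using bp_closed[OF assms(1,2) bp_refl[OF assms(1) single_NA[OF assms(3)]]]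
  by (simp add: msum_mult_single_r)

lemma rel_mult_l:
  assumes "blueprint B" "(M, N) \<in> bp_rel B" "b \<in> bp_carrier B"
  shows "(image_mset (bp_mult B b) M, image_mset (bp_mult B b) N) \<in> bp_rel B"
  using bp_closed[OF assms(1) bp_refl[OF assms(1) single_NA[OF assms(3)]] assms(2)]
  by (simp add: msum_mult_single_l)

lemma zero_mult:
  assumes "blueprint B" "is_zero B e" "x \<in> bp_carrier B"
  shows "is_zero B (bp_mult B e x)"
  using rel_mult_r[OF assms(1) _ assms(3), of "{#e#}" "{#}"] assms bp_monoid[OF assms(1)]
  by (auto simp: is_zero_def is_monoid_def)

lemma lin_gen_NA: "r \<subseteq> bp_carrier B \<times> bp_carrier B \<Longrightarrow> lin_gen r \<subseteq> NA B \<times> NA B"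
  unfolding lin_gen_def NA_def by fastforce

lemma lin_gen_map:
  assumes "(M, N) \<in> lin_gen r" "\<And>u v. (u, v) \<in> r \<Longrightarrow> (f u, f v) \<in> r'"
  shows "(image_mset f M, image_mset f N) \<in> lin_gen r'"
proof -
  obtain ps where ps: "M = mset (map fst ps)" "N = mset (map snd ps)" "set ps \<subseteq> r"
    using assms(1) unfolding lin_gen_def by blast
  let ?qs = "map (\<lambda>(u, v). (f u, f v)) ps"
  have "image_mset f M = mset (map fst ?qs)" "image_mset f N = mset (map snd ?qs)"
    using ps by (simp_all add: multiset.map_comp comp_def case_prod_beta)
  moreover have "set ?qs \<subseteq> r'" using ps(3) assms(2) by auto
  ultimately show ?thesis unfolding lin_gen_def by blast
qed

lemma NA_image: "M \<in> NA B \<Longrightarrow> (\<And>x. x \<in> bp_carrier B \<Longrightarrow> f x \<in> bp_carrier B) \<Longrightarrow> image_mset f M \<in> NA B"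
  unfolding NA_def by auto

lemma max_ideal_prime:
  assumes bp: "blueprint B" and mx: "maximal_ideal B I"
  shows "prime_ideal B I"
proof -
  have mon: "is_monoid B" using bp by (rule bp_monoid)
  note m = mon[unfolded is_monoid_def]
  have id: "ideal B I" and ne: "I \<noteq> bp_carrier B"
    and max: "\<And>J. ideal B J \<Longrightarrow> J \<noteq> bp_carrier B \<Longrightarrow> I \<subseteq> J \<Longrightarrow> J = I"
    using mx unfolding maximal_ideal_def by auto
  note idd = id[unfolded ideal_def]
  have one: "bp_one B \<in> bp_carrier B - I"
  proof
    show "bp_one B \<in> bp_carrier B" using m by blast
    show "bp_one B \<notin> I"
    proof
      assume "bp_one B \<in> I"
      then have "\<forall>a\<in>bp_carrier B. a \<in> I" using idd m by metis
      then show False using ne idd by blast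
    qed
  qed
  have "bp_mult B a b \<in> bp_carrier B - I" if a: "a \<in> bp_carrier B - I" and b: "b \<in> bp_carrier B - I" for a b
  proof
    show "bp_mult B a b \<in> bp_carrier B" using a b m by blast
    show "bp_mult B a b \<notin> I"
    proof
      assume ab: "bp_mult B a b \<in> I"
      define J where "J = {c \<in> bp_carrier B. bp_mult B c b \<in> I}"
      have bc: "b \<in> bp_carrier B" using b by blast
      have "ideal B J" unfolding ideal_def
      proof (intro conjI allI ballI impI)
        show "J \<subseteq> bp_carrier B" unfolding J_def by blast
        fix c d assume c: "c \<in> J" and d: "d \<in> bp_carrier B"
        have "bp_mult B (bp_mult B c d) b = bp_mult B (bp_mult B c b) d"
          using m c d bc unfolding J_def by (metis (no_types, lifting) mem_Collect_eq)
        then show "bp_mult B c d \<in> J" using c d m idd unfolding J_def by auto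
      next
        fix e assume "is_zero B e"
        then show "e \<in> J" using zero_mult[OF bp _ bc] idd unfolding J_def is_zero_def by blast
      next
        fix x c assume xc: "(x, c) \<in> sim_sub B J \<and> c \<in> J"
        let ?f = "image_mset (\<lambda>y. bp_mult B y b)"
        let ?LJ = "lin_ext B (sim_sup B J)" and ?LI = "lin_ext B (sim_sup B I)"
        have x: "x \<in> bp_carrier B" and c: "c \<in> bp_carrier B"
          and ch: "({#x#}, {#c#}) \<in> (bp_rel B O ?LJ)\<^sup>+ O bp_rel B"
          using xc unfolding sim_sub_def by auto
        have fR: "(?f M, ?f N) \<in> bp_rel B" if "(M, N) \<in> bp_rel B" for M N
          using rel_mult_r[OF bp that bc] .
        have eqI: "equiv (NA B) ?LI" unfolding lin_ext_def
          by (rule gen_equiv_equiv, rule lin_gen_NA) (auto simp: sim_sup_def)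
        have fL: "(?f M, ?f N) \<in> ?LI" if "(M, N) \<in> ?LJ" for M N
        proof -
          have "(?f M, ?f N) \<in> ?LI"
          proof (rule gen_equiv_map[OF eqI, of ?f "lin_gen (sim_sup B J)"])
            show "?f M \<in> NA B" if "M \<in> NA B" for M
              using that m bc by (intro NA_image) auto
            show "lin_gen (sim_sup B J) \<subseteq> NA B \<times> NA B"
              by (rule lin_gen_NA) (auto simp: sim_sup_def)
            show "(M, N) \<in> gen_equiv (NA B) (lin_gen (sim_sup B J))"
              using \<open>(M, N) \<in> ?LJ\<close> by (simp add: lin_ext_def)
            fix M N assume "(M, N) \<in> lin_gen (sim_sup B J)"
            then have "(?f M, ?f N) \<in> lin_gen (sim_sup B I)"
              by (rule lin_gen_map) (auto simp: sim_sup_def J_def m bc)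
            then show "(?f M, ?f N) \<in> ?LI" unfolding lin_ext_def using gen_equiv_sub by blast
          qed
          then show ?thesis .
        qed
        have comp: "(?f M, ?f N) \<in> bp_rel B O ?LI" if "(M, N) \<in> bp_rel B O ?LJ" for M N
          using that fR fL by blast
        have "({#bp_mult B x b#}, {#bp_mult B c b#}) \<in> (bp_rel B O ?LI)\<^sup>+ O bp_rel B"
        proof -
          obtain K where K1: "({#x#}, K) \<in> (bp_rel B O ?LJ)\<^sup>+" and K2: "(K, {#c#}) \<in> bp_rel B"
            using ch by blast
          have "(?f {#x#}, ?f K) \<in> (bp_rel B O ?LI)\<^sup>+" by (rule trancl_map[OF K1 comp])
          moreover have "(?f K, ?f {#c#}) \<in> bp_rel B" using fR[OF K2] .
          ultimately show ?thesis by auto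
        qed
        then have "(bp_mult B x b, bp_mult B c b) \<in> sim_sub B I"
          unfolding sim_sub_def using x c bc m by auto
        moreover have "bp_mult B c b \<in> I" using xc unfolding J_def by blast
        ultimately show "x \<in> J" using idd x unfolding J_def by blast
      qed
      moreover have "J \<noteq> bp_carrier B"
      proof
        assume "J = bp_carrier B"
        then have "bp_mult B (bp_one B) b \<in> I" using m unfolding J_def by blast
        then show False using m b by auto
      qed
      moreover have "I \<subseteq> J" unfolding J_def using idd bc by blast
      ultimately have "J = I" by (rule max)
      moreover have "a \<in> J" using a ab unfolding J_def by blast
      ultimately show False using a by blast
    qed
  qed
  then show ?thesis unfolding prime_ideal_def using id one by blast
qed


lemma lin_gen_refl:
  assumes "refl_on (bp_carrier B) r" "M \<in> NA B"
  shows "(M, M) \<in> lin_gen r"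
proof -
  obtain xs where xs: "mset xs = M" using ex_mset by blast
  let ?ps = "map (\<lambda>x. (x, x)) xs"
  have "M = mset (map fst ?ps)" "M = mset (map snd ?ps)" using xs by (simp_all add: comp_def)
  moreover have "set ?ps \<subseteq> r" using assms xs by (auto simp: refl_on_def NA_def)
  ultimately show ?thesis unfolding lin_gen_def by blast
qed

lemma lin_gen_add:
  assumes "(M, N) \<in> lin_gen r" "(P, Q) \<in> lin_gen r"
  shows "(M + P, N + Q) \<in> lin_gen r"
proof -
  obtain ps where ps: "M = mset (map fst ps)" "N = mset (map snd ps)" "set ps \<subseteq> r"
    using assms(1) unfolding lin_gen_def by blast
  obtain qs where qs: "P = mset (map fst qs)" "Q = mset (map snd qs)" "set qs \<subseteq> r"
    using assms(2) unfolding lin_gen_def by blast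
  have "M + P = mset (map fst (ps @ qs))" "N + Q = mset (map snd (ps @ qs))" using ps qs by auto
  moreover have "set (ps @ qs) \<subseteq> r" using ps qs by auto
  ultimately show ?thesis unfolding lin_gen_def by blast
qed

lemma prodlist_fst:
  "mset (map fst (concat (map (\<lambda>p. map (\<lambda>q. (bp_mult B (fst p) (fst q), bp_mult B (snd p) (snd q))) qs) ps)))
   = msum_mult B (mset (map fst ps)) (mset (map fst qs))"
  by (induction ps) (simp_all add: msum_mult_add multiset.map_comp comp_def)

lemma prodlist_snd:
  "mset (map snd (concat (map (\<lambda>p. map (\<lambda>q. (bp_mult B (fst p) (fst q), bp_mult B (snd p) (snd q))) qs) ps)))
   = msum_mult B (mset (map snd ps)) (mset (map snd qs))"
  by (induction ps) (simp_all add: msum_mult_add multiset.map_comp comp_def)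

lemma lin_gen_mult:
  assumes "(M, N) \<in> lin_gen r" "(P, Q) \<in> lin_gen r"
    and comp: "\<And>x x' y y'. (x, x') \<in> r \<Longrightarrow> (y, y') \<in> r \<Longrightarrow> (bp_mult B x y, bp_mult B x' y') \<in> r"
  shows "(msum_mult B M P, msum_mult B N Q) \<in> lin_gen r"
proof -
  obtain ps where ps: "M = mset (map fst ps)" "N = mset (map snd ps)" "set ps \<subseteq> r"
    using assms(1) unfolding lin_gen_def by blast
  obtain qs where qs: "P = mset (map fst qs)" "Q = mset (map snd qs)" "set qs \<subseteq> r"
    using assms(2) unfolding lin_gen_def by blast
  let ?l = "concat (map (\<lambda>p. map (\<lambda>q. (bp_mult B (fst p) (fst q), bp_mult B (snd p) (snd q))) qs) ps)"
  have "msum_mult B M P = mset (map fst ?l)" "msum_mult B N Q = mset (map snd ?l)"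
    using ps qs prodlist_fst prodlist_snd by metis+
  moreover have "set ?l \<subseteq> r" using ps(3) qs(3) comp by fastforce
  ultimately show ?thesis unfolding lin_gen_def by blast
qed

lemma lin_ext_pre:
  assumes mon: "is_monoid B" and eq: "equiv (bp_carrier B) r"
    and comp: "\<And>x x' y y'. (x, x') \<in> r \<Longrightarrow> (y, y') \<in> r \<Longrightarrow> (bp_mult B x y, bp_mult B x' y') \<in> r"
  shows "pre_addition B (lin_ext B r)"
proof -
  have rC: "r \<subseteq> bp_carrier B \<times> bp_carrier B" and rr: "refl_on (bp_carrier B) r"
    using eq by (auto simp: equiv_def)
  have SX: "lin_gen r \<subseteq> NA B \<times> NA B" using lin_gen_NA[OF rC] .
  have refl: "(P, P) \<in> lin_gen r" if "P \<in> NA B" for P using lin_gen_refl[OF rr that] .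
  show ?thesis unfolding pre_addition_def lin_ext_def
  proof (intro conjI allI impI)
    show "equiv (NA B) (gen_equiv (NA B) (lin_gen r))" by (rule gen_equiv_equiv[OF SX])
    fix M N P Q assume MN: "(M, N) \<in> gen_equiv (NA B) (lin_gen r)"
      and PQ: "(P, Q) \<in> gen_equiv (NA B) (lin_gen r)"
    show "(M + P, N + Q) \<in> gen_equiv (NA B) (lin_gen r)"
    proof (rule gen_equiv_op[OF SX _ _ _ MN PQ])
      show "M + N \<in> NA B" if "M \<in> NA B" "N \<in> NA B" for M N using that by (auto simp: NA_def)
      show "(M + P, N + P) \<in> lin_gen r" if "(M, N) \<in> lin_gen r" "P \<in> NA B" for M N P
        using lin_gen_add[OF that(1) refl[OF that(2)]] .
      show "(P + M, P + N) \<in> lin_gen r" if "(M, N) \<in> lin_gen r" "P \<in> NA B" for M N P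
        using lin_gen_add[OF refl[OF that(2)] that(1)] .
    qed
    show "(msum_mult B M P, msum_mult B N Q) \<in> gen_equiv (NA B) (lin_gen r)"
    proof (rule gen_equiv_op[OF SX _ _ _ MN PQ])
      show "msum_mult B M N \<in> NA B" if "M \<in> NA B" "N \<in> NA B" for M N
        using that mon unfolding NA_def msum_mult_def is_monoid_def by auto
      show "(msum_mult B M P, msum_mult B N P) \<in> lin_gen r" if "(M, N) \<in> lin_gen r" "P \<in> NA B" for M N P
        using lin_gen_mult[OF that(1) refl[OF that(2)] comp] .
      show "(msum_mult B P M, msum_mult B P N) \<in> lin_gen r" if "(M, N) \<in> lin_gen r" "P \<in> NA B" for M N P
        using lin_gen_mult[OF refl[OF that(2)] that(1) comp] .
    qed
  qed
qed

lemma single_lin_gen: "(a, b) \<in> r \<Longrightarrow> ({#a#}, {#b#}) \<in> lin_gen r"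
  unfolding lin_gen_def by (rule CollectI, rule exI[of _ "[(a,b)]"]) simp

lemma cong_facts:
  assumes bp: "blueprint B" and cg: "congruence B r"
  shows "equiv (bp_carrier B) r" "equiv (NA B) (R_ext B r)" "bp_rel B \<subseteq> R_ext B r"
    "lin_ext B r \<subseteq> R_ext B r" "lin_gen r \<subseteq> R_ext B r"
    "\<And>a b. a \<in> bp_carrier B \<Longrightarrow> b \<in> bp_carrier B \<Longrightarrow> ({#a#}, {#b#}) \<in> R_ext B r \<longleftrightarrow> (a, b) \<in> r"
    "\<And>x x' y y'. (x, x') \<in> r \<Longrightarrow> (y, y') \<in> r \<Longrightarrow> (bp_mult B x y, bp_mult B x' y') \<in> r"
proof -
  show eqr: "equiv (bp_carrier B) r" using cg by (simp add: congruence_def)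
  have pl: "pre_addition B (lin_ext B r)" using cg by (simp add: congruence_def)
  have eqL: "equiv (NA B) (lin_ext B r)" using pl by (simp add: pre_addition_def)
  have C2: "{(a, b). a \<in> bp_carrier B \<and> b \<in> bp_carrier B \<and> ({#a#}, {#b#}) \<in> R_ext B r} = r"
    using cg by (simp add: congruence_def)
  show eqE: "equiv (NA B) (R_ext B r)" unfolding R_ext_def
    by (rule gen_equiv_equiv) (use bp_equiv[OF bp] eqL in \<open>auto simp: equiv_def\<close>)
  show RE: "bp_rel B \<subseteq> R_ext B r" unfolding R_ext_def using gen_equiv_sub by blast
  show LE: "lin_ext B r \<subseteq> R_ext B r" unfolding R_ext_def using gen_equiv_sub by blast
  show GE: "lin_gen r \<subseteq> R_ext B r" using LE gen_equiv_sub unfolding lin_ext_def by blast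
  show sing: "({#a#}, {#b#}) \<in> R_ext B r \<longleftrightarrow> (a, b) \<in> r"
    if "a \<in> bp_carrier B" "b \<in> bp_carrier B" for a b
    using C2 that by blast
  fix x x' y y' assume xx: "(x, x') \<in> r" and yy: "(y, y') \<in> r"
  have c: "x \<in> bp_carrier B" "x' \<in> bp_carrier B" "y \<in> bp_carrier B" "y' \<in> bp_carrier B"
    using xx yy eqr by (auto simp: equiv_def)
  have "(msum_mult B {#x#} {#y#}, msum_mult B {#x'#} {#y'#}) \<in> lin_ext B r"
    using pl single_lin_gen[OF xx] single_lin_gen[OF yy] gen_equiv_sub
    unfolding pre_addition_def lin_ext_def by blast
  then have "({#bp_mult B x y#}, {#bp_mult B x' y'#}) \<in> R_ext B r"
    using LE by (auto simp: msum_mult_single_l)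
  moreover have "bp_mult B x y \<in> bp_carrier B" "bp_mult B x' y' \<in> bp_carrier B"
    using c bp_monoid[OF bp] by (auto simp: is_monoid_def)
  ultimately show "(bp_mult B x y, bp_mult B x' y') \<in> r" using sing by blast
qed


lemma R_ext_closed:
  assumes bp: "blueprint B" and cg: "congruence B r"
    and MN: "(M, N) \<in> R_ext B r" and PQ: "(P, Q) \<in> R_ext B r"
  shows "(M + P, N + Q) \<in> R_ext B r \<and> (msum_mult B M P, msum_mult B N Q) \<in> R_ext B r"
proof -
  have pl: "pre_addition B (lin_ext B r)" using cg by (simp add: congruence_def)
  have eqL: "equiv (NA B) (lin_ext B r)" using pl by (simp add: pre_addition_def)
  have eqR: "equiv (NA B) (bp_rel B)" using bp_equiv[OF bp] .
  let ?S = "bp_rel B \<union> lin_ext B r"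
  have SX: "?S \<subseteq> NA B \<times> NA B" using eqL eqR by (auto simp: equiv_def)
  have rS: "(P, P) \<in> bp_rel B \<and> (P, P) \<in> lin_ext B r" if "P \<in> NA B" for P
    using that eqL eqR by (auto simp: equiv_def refl_on_def)
  have clR: "(M + P, N + Q) \<in> bp_rel B \<and> (msum_mult B M P, msum_mult B N Q) \<in> bp_rel B"
    if "(M, N) \<in> bp_rel B" "(P, Q) \<in> bp_rel B" for M N P Q
    using bp_closed[OF bp that] .
  have clL: "(M + P, N + Q) \<in> lin_ext B r \<and> (msum_mult B M P, msum_mult B N Q) \<in> lin_ext B r"
    if "(M, N) \<in> lin_ext B r" "(P, Q) \<in> lin_ext B r" for M N P Q
    using pl that unfolding pre_addition_def by blast
  have MN': "(M, N) \<in> gen_equiv (NA B) ?S" and PQ': "(P, Q) \<in> gen_equiv (NA B) ?S"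
    using MN PQ unfolding R_ext_def by auto
  have mc: "msum_mult B M N \<in> NA B" if "M \<in> NA B" "N \<in> NA B" for M N
    using that bp_monoid[OF bp] unfolding NA_def msum_mult_def is_monoid_def by auto
  have "(M + P, N + Q) \<in> gen_equiv (NA B) ?S"
  proof (rule gen_equiv_op[OF SX _ _ _ MN' PQ'])
    show "M + N \<in> NA B" if "M \<in> NA B" "N \<in> NA B" for M N using that by (auto simp: NA_def)
    show "(M + P, N + P) \<in> ?S" if "(M, N) \<in> ?S" "P \<in> NA B" for M N P
      using that rS[OF that(2)] clR clL by blast
    show "(P + M, P + N) \<in> ?S" if "(M, N) \<in> ?S" "P \<in> NA B" for M N P
      using that rS[OF that(2)] clR clL by blast
  qed
  moreover have "(msum_mult B M P, msum_mult B N Q) \<in> gen_equiv (NA B) ?S"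
  proof (rule gen_equiv_op[OF SX _ _ _ MN' PQ'])
    show "msum_mult B M N \<in> NA B" if "M \<in> NA B" "N \<in> NA B" for M N using mc[OF that] .
    show "(msum_mult B M P, msum_mult B N P) \<in> ?S" if "(M, N) \<in> ?S" "P \<in> NA B" for M N P
      using that rS[OF that(2)] clR clL by blast
    show "(msum_mult B P M, msum_mult B P N) \<in> ?S" if "(M, N) \<in> ?S" "P \<in> NA B" for M N P
      using that rS[OF that(2)] clR clL by blast
  qed
  ultimately show ?thesis unfolding R_ext_def by blast
qed

lemma mult_congruence:
  assumes bp: "blueprint B" and cg: "congruence B r" and a: "a \<in> bp_carrier B"
  shows "congruence B {(x, y). x \<in> bp_carrier B \<and> y \<in> bp_carrier B \<and> (bp_mult B a x, bp_mult B a y) \<in> r}"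
    (is "congruence B ?r")
proof -
  note F = cong_facts[OF bp cg]
  have mon: "is_monoid B" using bp by (rule bp_monoid)
  note m = mon[unfolded is_monoid_def]
  have eqr': "equiv (bp_carrier B) ?r"
    using F(1) a m unfolding equiv_def refl_on_def sym_def trans_def by blast
  have comp': "(bp_mult B x y, bp_mult B x' y') \<in> ?r" if "(x, x') \<in> ?r" "(y, y') \<in> ?r" for x x' y y'
  proof -
    have c: "x \<in> bp_carrier B" "x' \<in> bp_carrier B" "y \<in> bp_carrier B" "y' \<in> bp_carrier B"
      and xr: "(bp_mult B a x, bp_mult B a x') \<in> r" and yr: "(bp_mult B a y, bp_mult B a y') \<in> r"
      using that by auto
    have rr: "(z, z) \<in> r" if "z \<in> bp_carrier B" for z using F(1) that by (auto simp: equiv_def refl_on_def)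
    have 1: "(bp_mult B (bp_mult B a x) y, bp_mult B (bp_mult B a x') y) \<in> r"
      using F(7)[OF xr rr[OF c(3)]] .
    have 2: "(bp_mult B x' (bp_mult B a y), bp_mult B x' (bp_mult B a y')) \<in> r"
      using F(7)[OF rr[OF c(2)] yr] .
    have e1: "bp_mult B a (bp_mult B x y) = bp_mult B (bp_mult B a x) y" using m a c by metis
    have e2: "bp_mult B (bp_mult B a x') y = bp_mult B x' (bp_mult B a y)" using m a c by metis
    have e3: "bp_mult B x' (bp_mult B a y') = bp_mult B a (bp_mult B x' y')" using m a c by metis
    have "(bp_mult B a (bp_mult B x y), bp_mult B a (bp_mult B x' y')) \<in> r"
      using 1 2 e1 e2 e3 F(1) unfolding equiv_def trans_def by metis
    then show ?thesis using c m by auto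
  qed
  have pl': "pre_addition B (lin_ext B ?r)" by (rule lin_ext_pre[OF mon eqr' comp'])
  let ?f = "image_mset (bp_mult B a)"
  have fNA: "?f M \<in> NA B" if "M \<in> NA B" for M using that a m by (intro NA_image) auto
  have eqL': "equiv (NA B) (lin_ext B ?r)" using pl' by (simp add: pre_addition_def)
  have fL: "(?f M, ?f N) \<in> R_ext B r" if "(M, N) \<in> lin_ext B ?r" for M N
  proof (rule gen_equiv_map[OF F(2) fNA])
    show "lin_gen ?r \<subseteq> NA B \<times> NA B" by (rule lin_gen_NA) auto
    show "(M, N) \<in> gen_equiv (NA B) (lin_gen ?r)" using that by (simp add: lin_ext_def)
    fix M N assume "(M, N) \<in> lin_gen ?r"
    then have "(?f M, ?f N) \<in> lin_gen r" by (rule lin_gen_map) auto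
    then show "(?f M, ?f N) \<in> R_ext B r" using F(5) by blast
  qed
  have fR: "(?f M, ?f N) \<in> R_ext B r" if "(M, N) \<in> bp_rel B" for M N
    using rel_mult_l[OF bp that a] F(3) by blast
  have fE: "(?f M, ?f N) \<in> R_ext B r" if "(M, N) \<in> R_ext B ?r" for M N
  proof (rule gen_equiv_map[OF F(2) fNA])
    show "bp_rel B \<union> lin_ext B ?r \<subseteq> NA B \<times> NA B"
      using bp_equiv[OF bp] eqL' by (auto simp: equiv_def)
    show "(M, N) \<in> gen_equiv (NA B) (bp_rel B \<union> lin_ext B ?r)" using that by (simp add: R_ext_def)
    fix M N assume "(M, N) \<in> bp_rel B \<union> lin_ext B ?r"
    then show "(?f M, ?f N) \<in> R_ext B r" using fR fL by blast
  qed
  have C2: "{(x, y). x \<in> bp_carrier B \<and> y \<in> bp_carrier B \<and> ({#x#}, {#y#}) \<in> R_ext B ?r} = ?r"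
  proof (intro equalityI subsetI)
    fix p assume "p \<in> {(x, y). x \<in> bp_carrier B \<and> y \<in> bp_carrier B \<and> ({#x#}, {#y#}) \<in> R_ext B ?r}"
    then obtain x y where p: "p = (x, y)" "x \<in> bp_carrier B" "y \<in> bp_carrier B"
      "({#x#}, {#y#}) \<in> R_ext B ?r" by blast
    have "({#bp_mult B a x#}, {#bp_mult B a y#}) \<in> R_ext B r" using fE[OF p(4)] by simp
    then have "(bp_mult B a x, bp_mult B a y) \<in> r" using F(6) p a m by blast
    then show "p \<in> ?r" using p by blast
  next
    fix p assume pr: "p \<in> ?r"
    then obtain x y where p: "p = (x, y)" "x \<in> bp_carrier B" "y \<in> bp_carrier B" by blast
    have "({#x#}, {#y#}) \<in> lin_ext B ?r"
      using single_lin_gen[of x y ?r] pr p gen_equiv_sub unfolding lin_ext_def by blast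
    then have "({#x#}, {#y#}) \<in> R_ext B ?r" unfolding R_ext_def using gen_equiv_sub by blast
    then show "p \<in> {(x, y). x \<in> bp_carrier B \<and> y \<in> bp_carrier B \<and> ({#x#}, {#y#}) \<in> R_ext B ?r}"
      using p by blast
  qed
  show ?thesis unfolding congruence_def using eqr' pl' C2 by blast
qed





lemma img_eq_lin:
  assumes eq: "equiv (bp_carrier B) r"
  shows "M \<in> NA B \<Longrightarrow> N \<in> NA B \<Longrightarrow> image_mset (\<lambda>x. r``{x}) M = image_mset (\<lambda>x. r``{x}) N
    \<Longrightarrow> (M, N) \<in> lin_gen r"
proof (induction M arbitrary: N)
  case empty
  then have "N = {#}" by simp
  moreover have "({#}, {#}) \<in> lin_gen r" unfolding lin_gen_def
    by (rule CollectI, rule exI[of _ "[]"]) simp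
  ultimately show ?case by simp
next
  case (add x M)
  then have "image_mset (\<lambda>x. r``{x}) N = add_mset (r``{x}) (image_mset (\<lambda>x. r``{x}) M)" by simp
  then obtain N1 y where N: "N = add_mset y N1" "r``{y} = r``{x}"
    "image_mset (\<lambda>x. r``{x}) N1 = image_mset (\<lambda>x. r``{x}) M"
    using msed_map_invR[of "\<lambda>x. r``{x}" N] by blast
  have c: "M \<in> NA B" "N1 \<in> NA B" "x \<in> bp_carrier B" "y \<in> bp_carrier B"
    using add.prems N(1) by (auto simp: NA_def)
  have IH: "(M, N1) \<in> lin_gen r" using add.IH[OF c(1) c(2)] N(3) by simp
  have xy: "(x, y) \<in> r" using eq_equiv_class_iff[OF eq c(3) c(4)] N(2) by simp
  have "({#x#}, {#y#}) \<in> lin_gen r" using single_lin_gen[OF xy] .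
  from lin_gen_add[OF this IH] show ?case using N by simp
qed

lemma q_simps:
  "bp_carrier (quotient_bp B r) = bp_carrier B // r"
  "bp_mult (quotient_bp B r) = bp_mult (quot_monoid B r)"
  "bp_one (quotient_bp B r) = r``{bp_one B}"
  "bp_rel (quotient_bp B r) = \<Inter>{P. pre_addition (quot_monoid B r) P \<and>
        {(image_mset (\<lambda>a. r `` {a}) M, image_mset (\<lambda>a. r `` {a}) N) | M N. (M, N) \<in> bp_rel B} \<subseteq> P}"
  "bp_carrier (quot_monoid B r) = bp_carrier B // r"
  by (simp_all add: quotient_bp_def quot_monoid_def)

lemma qmult:
  assumes bp: "blueprint B" and cg: "congruence B r" and x: "x \<in> bp_carrier B" and y: "y \<in> bp_carrier B"
  shows "bp_mult (quot_monoid B r) (r``{x}) (r``{y}) = r``{bp_mult B x y}"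
proof -
  note F = cong_facts[OF bp cg]
  have xx: "x \<in> r``{x}" "y \<in> r``{y}" using x y F(1) by (auto simp: equiv_def refl_on_def)
  have a: "(x, SOME a. a \<in> r``{x}) \<in> r" using someI[of "\<lambda>a. a \<in> r``{x}", OF xx(1)] by simp
  have b: "(y, SOME a. a \<in> r``{y}) \<in> r" using someI[of "\<lambda>a. a \<in> r``{y}", OF xx(2)] by simp
  have "(bp_mult B x y, bp_mult B (SOME a. a \<in> r``{x}) (SOME a. a \<in> r``{y})) \<in> r"
    using F(7)[OF a b] .
  then have "r``{bp_mult B x y} = r``{bp_mult B (SOME a. a \<in> r``{x}) (SOME a. a \<in> r``{y})}"
    by (rule equiv_class_eq[OF F(1)])
  then show ?thesis unfolding quot_monoid_def by simp
qed



lemma P_pre: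
  assumes bp: "blueprint B" and cg: "congruence B r"
  shows "pre_addition (quot_monoid B r)
    {(image_mset (\<lambda>a. r``{a}) M, image_mset (\<lambda>a. r``{a}) N) | M N. (M, N) \<in> R_ext B r}"
  (is "pre_addition ?q ?P")
proof -
  note F = cong_facts[OF bp cg]
  let ?c = "\<lambda>a. r``{a}"
  have EX: "R_ext B r \<subseteq> NA B \<times> NA B" using F(2) by (simp add: equiv_def)
  have imgNA: "image_mset ?c M \<in> NA ?q" if "M \<in> NA B" for M
    using that by (auto simp: NA_def q_simps quotientI)
  have eqP: "equiv (NA ?q) ?P"
  proof (rule equivI)
    show "?P \<subseteq> NA ?q \<times> NA ?q" using EX imgNA by blast
    show "refl_on (NA ?q) ?P" unfolding refl_on_def
    proof
      fix X assume X: "X \<in> NA ?q"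
      let ?M = "image_mset (\<lambda>A. SOME a. a \<in> A) X"
      have cl: "(SOME a. a \<in> A) \<in> A \<and> ?c (SOME a. a \<in> A) = A" if hA: "A \<in> bp_carrier B // r" for A
      proof -
        obtain x where A: "A = ?c x" "x \<in> bp_carrier B" using hA by (rule quotientE)
        have "x \<in> A" using A F(1) by (auto simp: equiv_def refl_on_def)
        then have s: "(SOME a. a \<in> A) \<in> A" by (rule someI)
        then show ?thesis using A F(1) by (auto simp: equiv_class_eq_iff)
      qed
      have Xs: "A \<in> bp_carrier B // r" if "A \<in># X" for A using X that by (auto simp: NA_def q_simps)
      have MNA: "?M \<in> NA B" unfolding NA_def
      proof (rule CollectI, rule subsetI)
        fix a assume "a \<in># ?M"
        then obtain A where A: "A \<in># X" "a = (SOME a. a \<in> A)" by auto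
        then have "a \<in> A" using cl[OF Xs[OF A(1)]] by simp
        then show "a \<in> bp_carrier B" using in_quotient_imp_subset[OF F(1) Xs[OF A(1)]] by blast
      qed
      have "image_mset ?c ?M = image_mset id X"
        unfolding multiset.map_comp
        by (rule image_mset_cong) (use cl Xs in auto)
      then have "image_mset ?c ?M = X" by simp
      moreover have "(?M, ?M) \<in> R_ext B r" using F(2) MNA by (auto simp: equiv_def refl_on_def)
      ultimately show "(X, X) \<in> ?P" by force
    qed
    show "sym ?P" using F(2) unfolding sym_def equiv_def by blast
    show "trans ?P" unfolding trans_def
    proof (intro allI impI)
      fix X Y Z assume "(X, Y) \<in> ?P" "(Y, Z) \<in> ?P"
      then obtain M N N' K where 1: "X = image_mset ?c M" "Y = image_mset ?c N" "(M, N) \<in> R_ext B r"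
        and 2: "Y = image_mset ?c N'" "Z = image_mset ?c K" "(N', K) \<in> R_ext B r" by blast
      have "(N, N') \<in> lin_gen r" using img_eq_lin[OF F(1)] 1 2 EX by blast
      then have "(N, N') \<in> R_ext B r" using F(5) by blast
      then have "(M, K) \<in> R_ext B r" using 1 2 F(2) unfolding equiv_def trans_def by blast
      then show "(X, Z) \<in> ?P" using 1 2 by blast
    qed
  qed
  have mimg: "msum_mult ?q (image_mset ?c M) (image_mset ?c N) = image_mset ?c (msum_mult B M N)"
    if "M \<in> NA B" "N \<in> NA B" for M N
    using that(1)
  proof (induction M)
    case empty then show ?case by simp
  next
    case (add x M)
    have x: "x \<in> bp_carrier B" and M: "M \<in> NA B" using add.prems by (auto simp: NA_def)
    have "image_mset (bp_mult ?q (?c x)) (image_mset ?c N) = image_mset ?c (image_mset (bp_mult B x) N)"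
      unfolding multiset.map_comp
    proof (rule image_mset_cong)
      fix y assume "y \<in># N"
      then have "y \<in> bp_carrier B" using that(2) by (auto simp: NA_def)
      then show "(bp_mult ?q (?c x) \<circ> ?c) y = (?c \<circ> bp_mult B x) y" using qmult[OF bp cg x] by simp
    qed
    then show ?case using add.IH[OF M] by (simp add: msum_mult_add)
  qed
  show ?thesis unfolding pre_addition_def
  proof (intro conjI eqP allI impI)
    fix M N P Q assume "(M, N) \<in> ?P" "(P, Q) \<in> ?P"
    then obtain M0 N0 P0 Q0 where 1: "M = image_mset ?c M0" "N = image_mset ?c N0" "(M0, N0) \<in> R_ext B r"
      and 2: "P = image_mset ?c P0" "Q = image_mset ?c Q0" "(P0, Q0) \<in> R_ext B r" by blast
    have cl: "(M0 + P0, N0 + Q0) \<in> R_ext B r \<and> (msum_mult B M0 P0, msum_mult B N0 Q0) \<in> R_ext B r"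
      using R_ext_closed[OF bp cg 1(3) 2(3)] .
    show "(M + P, N + Q) \<in> ?P" using 1 2 cl by force
    have "msum_mult ?q M P = image_mset ?c (msum_mult B M0 P0)"
      "msum_mult ?q N Q = image_mset ?c (msum_mult B N0 Q0)"
      using 1 2 mimg EX by blast+
    then show "(msum_mult ?q M P, msum_mult ?q N Q) \<in> ?P" using cl by blast
  qed
qed



lemma single_img:
  assumes "image_mset f M = {#X#}" shows "\<exists>m. M = {#m#} \<and> f m = X"
  using msed_map_invR[of f M X "{#}"] assms by auto

lemma max_cong_prime:
  assumes bp: "blueprint B" and z: "is_zero B z" and mc: "maximal_congruence B r"
  shows "prime_congruence B r"
proof -
  have pc: "proper_congruence B r" using mc by (simp add: maximal_congruence_def)
  have cg: "congruence B r" and prp: "\<exists>a\<in>bp_carrier B. \<exists>b\<in>bp_carrier B. (a, b) \<notin> r"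
    using pc by (auto simp: proper_congruence_def)
  have max: "\<And>r'. proper_congruence B r' \<Longrightarrow> r \<subseteq> r' \<Longrightarrow> r' = r"
    using mc by (simp add: maximal_congruence_def)
  note F = cong_facts[OF bp cg]
  have mon: "is_monoid B" using bp by (rule bp_monoid)
  note m = mon[unfolded is_monoid_def]
  let ?q = "quotient_bp B r"
  let ?c = "\<lambda>a. r``{a}"
  let ?P = "{(image_mset ?c M, image_mset ?c N) | M N. (M, N) \<in> R_ext B r}"
  have mcl: "\<And>a b. a \<in> bp_carrier B \<Longrightarrow> b \<in> bp_carrier B \<Longrightarrow> bp_mult B a b \<in> bp_carrier B"
    and mcomm: "\<And>a b. a \<in> bp_carrier B \<Longrightarrow> b \<in> bp_carrier B \<Longrightarrow> bp_mult B a b = bp_mult B b a"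
    and mone: "\<And>a. a \<in> bp_carrier B \<Longrightarrow> bp_mult B (bp_one B) a = a"
    and oneC: "bp_one B \<in> bp_carrier B"
    using m by blast+
  have zC: "z \<in> bp_carrier B" using z by (simp add: is_zero_def)
  have EX: "R_ext B r \<subseteq> NA B \<times> NA B" using F(2) by (simp add: equiv_def)
  have relq: "bp_rel ?q \<subseteq> ?P"
    unfolding q_simps(4)
  proof (rule Inter_lower, rule CollectI, intro conjI P_pre[OF bp cg] subsetI)
    fix p assume "p \<in> {(image_mset ?c M, image_mset ?c N) | M N. (M, N) \<in> bp_rel B}"
    then obtain M N where "p = (image_mset ?c M, image_mset ?c N)" "(M, N) \<in> bp_rel B" by blast
    moreover have "(M, N) \<in> R_ext B r" using F(3) calculation(2) by blast
    ultimately show "p \<in> ?P" by blast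
  qed
  have imgq: "(image_mset ?c M, image_mset ?c N) \<in> bp_rel ?q" if "(M, N) \<in> bp_rel B" for M N
    unfolding q_simps(4) using that by blast
  have zr: "(e, z) \<in> r" if "is_zero B e" for e
  proof -
    have "({#e#}, {#}) \<in> bp_rel B" "({#z#}, {#}) \<in> bp_rel B" using that z by (auto simp: is_zero_def)
    then have "({#e#}, {#z#}) \<in> bp_rel B" using bp_equiv[OF bp] unfolding equiv_def sym_def trans_def by blast
    then show ?thesis using F(3) F(6) that zC by (auto simp: is_zero_def)
  qed
  have cls_eq: "?c x = ?c y \<longleftrightarrow> (x, y) \<in> r" if "x \<in> bp_carrier B" "y \<in> bp_carrier B" for x y
    using eq_equiv_class_iff[OF F(1) that] .
  have rr: "(x, x) \<in> r" if "x \<in> bp_carrier B" for x using F(1) that by (auto simp: equiv_def refl_on_def)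
  have rsym: "(y, x) \<in> r" if "(x, y) \<in> r" for x y using F(1) that by (auto simp: equiv_def sym_def)
  have rtrans: "(x, w) \<in> r" if "(x, y) \<in> r" "(y, w) \<in> r" for x y w
    using F(1) that unfolding equiv_def trans_def by blast
  have noz: False if "(bp_one B, z) \<in> r"
  proof -
    have xz: "(x, z) \<in> r" if x: "x \<in> bp_carrier B" for x
    proof -
      have "(bp_mult B (bp_one B) x, bp_mult B z x) \<in> r" using F(7)[OF \<open>(bp_one B, z) \<in> r\<close> rr[OF x]] .
      moreover have "bp_mult B (bp_one B) x = x" using m x by blast
      moreover have "(bp_mult B z x, z) \<in> r" using zr[OF zero_mult[OF bp z x]] .
      ultimately show ?thesis using rtrans by metis
    qed
    then show False using prp rsym rtrans by blast
  qed
  have proper: "proper_bp ?q" unfolding proper_bp_def q_simps(1)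
  proof (intro ballI impI)
    fix X Y assume XY: "({#X#}, {#Y#}) \<in> bp_rel ?q"
    then obtain M N where MN: "{#X#} = image_mset ?c M" "{#Y#} = image_mset ?c N" "(M, N) \<in> R_ext B r"
      using relq by blast
    obtain mm where mm: "M = {#mm#}" "?c mm = X" using single_img[OF MN(1)[symmetric]] by blast
    obtain nn where nn: "N = {#nn#}" "?c nn = Y" using single_img[OF MN(2)[symmetric]] by blast
    have c: "mm \<in> bp_carrier B" "nn \<in> bp_carrier B" using EX MN(3) mm nn by (auto simp: NA_def)
    then have "(mm, nn) \<in> r" using F(6)[OF c] MN(3) mm(1) nn(1) by simp
    then show "X = Y" using mm(2) nn(2) cls_eq[OF c] by simp
  qed
  have one: "({#bp_one ?q#}, {#}) \<notin> bp_rel ?q"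
  proof
    assume "({#bp_one ?q#}, {#}) \<in> bp_rel ?q"
    then obtain M N where MN: "{#?c (bp_one B)#} = image_mset ?c M" "{#} = image_mset ?c N" "(M, N) \<in> R_ext B r"
      using relq unfolding q_simps(3) by blast
    obtain mm where mm: "M = {#mm#}" "?c mm = ?c (bp_one B)" using single_img[OF MN(1)[symmetric]] by blast
    have N: "N = {#}" using MN(2) by simp
    have c: "mm \<in> bp_carrier B" using EX MN(3) mm by (auto simp: NA_def)
    have "({#z#}, {#}) \<in> R_ext B r" using z F(3) by (auto simp: is_zero_def)
    moreover have "({#mm#}, {#}) \<in> R_ext B r" using MN(3) mm(1) N by simp
    ultimately have "({#mm#}, {#z#}) \<in> R_ext B r" using F(2) unfolding equiv_def sym_def trans_def by blast
    then have "(mm, z) \<in> r" using F(6)[OF c zC] by simp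
    moreover have "(mm, bp_one B) \<in> r" using mm(2) cls_eq[OF c, of "bp_one B"] m by simp
    then have "(bp_one B, mm) \<in> r" by (rule rsym)
    ultimately show False using noz rtrans by blast
  qed
  have elems: "is_zero ?q X \<or> integral_elem ?q X" if X: "X \<in> bp_carrier ?q" for X
  proof -
    obtain a where a: "X = ?c a" "a \<in> bp_carrier B" using X unfolding q_simps(1) by (rule quotientE)
    show ?thesis
    proof (cases "(a, z) \<in> r")
      case True
      then have "X = ?c z" using a cls_eq[OF a(2) zC] by simp
      moreover have "({#?c z#}, {#}) \<in> bp_rel ?q" using imgq[of "{#z#}" "{#}"] z by (simp add: is_zero_def)
      ultimately show ?thesis using X by (simp add: is_zero_def)
    next
      case False
      let ?r' = "{(x, y). x \<in> bp_carrier B \<and> y \<in> bp_carrier B \<and> (bp_mult B a x, bp_mult B a y) \<in> r}"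
      have cg': "congruence B ?r'" by (rule mult_congruence[OF bp cg a(2)])
      have sub: "r \<subseteq> ?r'"
      proof
        fix p assume p: "p \<in> r"
        then obtain x y where xy: "p = (x, y)" "(x, y) \<in> r" by (cases p) auto
        have "x \<in> bp_carrier B" "y \<in> bp_carrier B" using xy F(1) by (auto simp: equiv_def)
        then show "p \<in> ?r'" using xy(1) F(7)[OF rr[OF a(2)] xy(2)] by simp
      qed
      have rr': "?r' = r"
      proof (rule max[OF _ sub])
        show "proper_congruence B ?r'" unfolding proper_congruence_def
        proof (intro conjI cg')
          show "\<exists>x\<in>bp_carrier B. \<exists>y\<in>bp_carrier B. (x, y) \<notin> ?r'"
          proof (rule ccontr)
            assume "\<not> ?thesis"
            then have "(bp_one B, z) \<in> ?r'" using oneC zC by blast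
            then have "(bp_mult B a (bp_one B), bp_mult B a z) \<in> r" by blast
            moreover have "bp_mult B a (bp_one B) = a" using mcomm[OF a(2) oneC] mone[OF a(2)] by simp
            moreover have "bp_mult B a z = bp_mult B z a" using mcomm a(2) zC by blast
            moreover have "(bp_mult B z a, z) \<in> r" using zr[OF zero_mult[OF bp z a(2)]] .
            ultimately have "(a, z) \<in> r" using rtrans by simp
            then show False using False by blast
          qed
        qed
      qed
      have "inj_on (bp_mult ?q X) (bp_carrier ?q)"
      proof (rule inj_onI)
        fix Y1 Y2 assume Y1: "Y1 \<in> bp_carrier ?q" and Y2: "Y2 \<in> bp_carrier ?q"
          and eqm: "bp_mult ?q X Y1 = bp_mult ?q X Y2"
        obtain x where x: "Y1 = ?c x" "x \<in> bp_carrier B" using Y1 unfolding q_simps(1) by (rule quotientE)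
        obtain y where y: "Y2 = ?c y" "y \<in> bp_carrier B" using Y2 unfolding q_simps(1) by (rule quotientE)
        have "?c (bp_mult B a x) = ?c (bp_mult B a y)"
          using eqm unfolding q_simps(2) a(1) x(1) y(1) qmult[OF bp cg a(2) x(2)] qmult[OF bp cg a(2) y(2)] .
        then have "(bp_mult B a x, bp_mult B a y) \<in> r"
          using cls_eq[OF mcl[OF a(2) x(2)] mcl[OF a(2) y(2)]] by simp
        then have "(x, y) \<in> ?r'" using x y by blast
        then have "(x, y) \<in> r" using rr' by simp
        then show "Y1 = Y2" using x(1) y(1) cls_eq[OF x(2) y(2)] by simp
      qed
      then show ?thesis using X by (simp add: integral_elem_def)
    qed
  qed
  have "integral_bp ?q" unfolding integral_bp_def using proper one elems by blast
  then show ?thesis unfolding prime_congruence_def using pc by blast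
qed

theorem mainTheorem15:
  fixes B :: "'a blueprint"
  assumes "blueprint B"
  shows "(\<forall>I. maximal_ideal B I \<longrightarrow> prime_ideal B I)
    \<and> ((\<exists>e. is_zero B e) \<longrightarrow> (\<forall>r. maximal_congruence B r \<longrightarrow> prime_congruence B r))"
  using max_ideal_prime[OF assms] max_cong_prime[OF assms] by blast


end
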